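(* For $d\ge3$, the maximal number of pairwise disjoint lines in $\mathcal{L}^0\cup\mathcal{L}^s$ is $2d$ for $s=1,2$, and the maximal number of pairwise disjoint lines in $\mathcal{L}^1\cup\mathcal{L}^2$ is $2d$. Consequently the maximal number $\mathfrak{s}({\rm F}_d)$ of pairwise disjoint lines on ${\rm F}_d$ satisfies $2d\le\mathfrak{s}({\rm F}_d)\le 3d$.
   Context: ${\rm F}_d\subset\mathbb{P}^3(\mathbb{C})$ is the surface $x^d-y^d-z^d+w^d=0$. Fix a primitive $d$-th root of unity $\eta$ and $v\in\mathbb{C}$ with $v^d=-1$. For $k,i\in\{0,\dots,d-1\}$ define $L^0_{k,i}:\{y=\eta^i x,\ w=\eta^k z\}$, $L^1_{k,i}:\{x=\eta^{k+i}z,\ y=\eta^i w\}$, $L^2_{k,i}:\{x=v\eta^i w,\ y=v\eta^{k+i}z\}$, and $\mathcal{L}^s=\{L^s_{k,i}\}_{k,i}$; these are all the lines on ${\rm F}_d$. *)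

theory Defs
  imports Complex_Main
begin

text \<open>Points of projective 3-space are represented by their homogeneous coordinate
vectors (x,y,z,w) in C^4. A projective line is represented by the corresponding
2-dimensional linear subspace of C^4. Two projective lines are disjoint iff the
subspaces meet only in the zero vector.\<close>

type_synonym pt4 = "complex \<times> complex \<times> complex \<times> complex"

definition primitive_root :: "nat \<Rightarrow> complex \<Rightarrow> bool" where
  "primitive_root d \<eta> \<longleftrightarrow> \<eta> ^ d = 1 \<and> (\<forall>m. 0 < m \<and> m < d \<longrightarrow> \<eta> ^ m \<noteq> 1)"

definition L0 :: "complex \<Rightarrow> nat \<Rightarrow> nat \<Rightarrow> pt4 set" where
  "L0 \<eta> k i = {(x,y,z,w). y = \<eta>^i * x \<and> w = \<eta>^k * z}"

definition L1 :: "complex \<Rightarrow> nat \<Rightarrow> nat \<Rightarrow> pt4 set" where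
  "L1 \<eta> k i = {(x,y,z,w). x = \<eta>^(k+i) * z \<and> y = \<eta>^i * w}"

definition L2 :: "complex \<Rightarrow> complex \<Rightarrow> nat \<Rightarrow> nat \<Rightarrow> pt4 set" where
  "L2 \<eta> v k i = {(x,y,z,w). x = v * \<eta>^i * w \<and> y = v * \<eta>^(k+i) * z}"

definition fam0 :: "nat \<Rightarrow> complex \<Rightarrow> pt4 set set" where
  "fam0 d \<eta> = {L0 \<eta> k i | k i. k < d \<and> i < d}"

definition fam1 :: "nat \<Rightarrow> complex \<Rightarrow> pt4 set set" where
  "fam1 d \<eta> = {L1 \<eta> k i | k i. k < d \<and> i < d}"

definition fam2 :: "nat \<Rightarrow> complex \<Rightarrow> complex \<Rightarrow> pt4 set set" where
  "fam2 d \<eta> v = {L2 \<eta> v k i | k i. k < d \<and> i < d}"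

text \<open>All lines on the Fermat surface F_d (by the context, these are exactly the
lines of the three families).\<close>

definition lines_F :: "nat \<Rightarrow> complex \<Rightarrow> complex \<Rightarrow> pt4 set set" where
  "lines_F d \<eta> v = fam0 d \<eta> \<union> fam1 d \<eta> \<union> fam2 d \<eta> v"

definition pairwise_disjoint_lines :: "pt4 set set \<Rightarrow> bool" where
  "pairwise_disjoint_lines S \<longleftrightarrow>
     (\<forall>A\<in>S. \<forall>B\<in>S. A \<noteq> B \<longrightarrow> A \<inter> B \<subseteq> {(0,0,0,0)})"

definition max_disjoint :: "pt4 set set \<Rightarrow> nat" where
  "max_disjoint F = Max {card S | S. S \<subseteq> F \<and> pairwise_disjoint_lines S}"

definition s_F :: "nat \<Rightarrow> complex \<Rightarrow> complex \<Rightarrow> nat" where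
  "s_F d \<eta> v = max_disjoint (lines_F d \<eta> v)"

end

theory Submission
  imports Defs
begin

lemma pr_basics:
  assumes "primitive_root d \<eta>" "d \<ge> 3"
  shows "\<eta> ^ d = 1" "\<eta> \<noteq> 0" "\<eta> \<noteq> 1"
proof -
  show e: "\<eta> ^ d = 1" using assms unfolding primitive_root_def by auto
  show "\<eta> \<noteq> 0" using e assms by (auto simp: power_0_left)
  show "\<eta> \<noteq> 1" using assms unfolding primitive_root_def
  proof -
    have "(1::nat) < d" using assms(2) by simp
    hence "\<eta> ^ 1 \<noteq> 1" using assms(1) unfolding primitive_root_def by blast
    thus ?thesis by simp
  qed
qed

lemma pr_distinct:
  assumes "primitive_root d \<eta>" "d \<ge> 3" "a < d" "b < d" "a \<noteq> b"
  shows "\<eta> ^ a \<noteq> \<eta> ^ b"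
proof
  assume eq: "\<eta> ^ a = \<eta> ^ b"
  have nz: "\<eta> \<noteq> 0" using pr_basics[OF assms(1,2)] by simp
  have key: "\<And>a b. a < b \<Longrightarrow> b < d \<Longrightarrow> \<eta> ^ a = \<eta> ^ b \<Longrightarrow> False"
  proof -
    fix a b :: nat assume ab: "a < b" "b < d" "\<eta> ^ a = \<eta> ^ b"
    have "a + (b - a) = b" using ab by simp
    hence "\<eta> ^ b = \<eta> ^ a * \<eta> ^ (b - a)" by (metis power_add)
    hence "\<eta> ^ (b - a) = 1" using ab nz by simp
    moreover have "0 < b - a" "b - a < d" using ab by auto
    ultimately show False using assms(1) unfolding primitive_root_def by blast
  qed
  show False
  proof (cases "a < b")
    case True thus ?thesis using key[of a b] eq assms by simp
  next
    case False hence "b < a" using assms by auto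
    thus ?thesis using key[of b a] eq assms by simp
  qed
qed

lemma pow_mod:
  assumes "(\<eta>::complex) ^ d = 1"
  shows "\<eta> ^ n = \<eta> ^ (n mod d)"
proof -
  have "\<eta> ^ n = \<eta> ^ (d * (n div d) + n mod d)" by simp
  also have "\<dots> = (\<eta> ^ d) ^ (n div d) * \<eta> ^ (n mod d)" by (simp only: power_add power_mult)
  finally show ?thesis using assms by simp
qed

lemma cancel_pow:
  assumes "(\<eta>::complex) ^ a \<noteq> \<eta> ^ b" "\<eta> ^ a * x = \<eta> ^ b * x"
  shows "x = 0"
  using assms by simp

lemma L1_in:
  assumes "\<eta> ^ d = 1" "d > 0" "i < d"
  shows "L1 \<eta> k i \<in> fam1 d \<eta>"
proof -
  have "L1 \<eta> k i = L1 \<eta> (k mod d) i"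
    unfolding L1_def using pow_mod[OF assms(1), of "k+i"] pow_mod[OF assms(1), of "k mod d+i"]
    by (simp add: mod_add_left_eq)
  thus ?thesis unfolding fam1_def using assms(2,3) mod_less_divisor by blast
qed

lemma L2_in:
  assumes "\<eta> ^ d = 1" "d > 0" "i < d"
  shows "L2 \<eta> v k i \<in> fam2 d \<eta> v"
proof -
  have "L2 \<eta> v k i = L2 \<eta> v (k mod d) i"
    unfolding L2_def using pow_mod[OF assms(1), of "k+i"] pow_mod[OF assms(1), of "k mod d+i"]
    by (simp add: mod_add_left_eq)
  thus ?thesis unfolding fam2_def using assms(2,3) mod_less_divisor by blast
qed

lemma construct:
  fixes h :: "nat \<Rightarrow> pt4 set"
  assumes nz: "\<And>n. n < N \<Longrightarrow> \<exists>p. p \<noteq> (0,0,0,0) \<and> p \<in> h n"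
      and dj: "\<And>n m. n < N \<Longrightarrow> m < N \<Longrightarrow> n \<noteq> m \<Longrightarrow> h n \<inter> h m \<subseteq> {(0,0,0,0)}"
  shows "pairwise_disjoint_lines (h ` {..<N})" "card (h ` {..<N}) = N"
proof -
  have "inj_on h {..<N}"
  proof (rule inj_onI)
    fix n m assume n: "n \<in> {..<N}" and m: "m \<in> {..<N}" and e: "h n = h m"
    show "n = m"
    proof (rule ccontr)
      assume "n \<noteq> m"
      hence "h n \<inter> h m \<subseteq> {(0,0,0,0)}" using dj n m by auto
      moreover obtain p where "p \<noteq> (0,0,0,0)" "p \<in> h n" using nz[of n] n by blast
      ultimately show False using e by auto
    qed
  qed
  thus "card (h ` {..<N}) = N" by (simp add: card_image)
  show "pairwise_disjoint_lines (h ` {..<N})"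
    unfolding pairwise_disjoint_lines_def using dj by auto
qed

lemma construct2:
  fixes f g :: "nat \<Rightarrow> pt4 set"
  assumes nzf: "\<And>a. a < d \<Longrightarrow> \<exists>p. p \<noteq> (0,0,0,0) \<and> p \<in> f a"
      and nzg: "\<And>a. a < d \<Longrightarrow> \<exists>p. p \<noteq> (0,0,0,0) \<and> p \<in> g a"
      and ff: "\<And>a b. a < d \<Longrightarrow> b < d \<Longrightarrow> a \<noteq> b \<Longrightarrow> f a \<inter> f b \<subseteq> {(0,0,0,0)}"
      and gg: "\<And>a b. a < d \<Longrightarrow> b < d \<Longrightarrow> a \<noteq> b \<Longrightarrow> g a \<inter> g b \<subseteq> {(0,0,0,0)}"
      and fg: "\<And>a b. a < d \<Longrightarrow> b < d \<Longrightarrow> f a \<inter> g b \<subseteq> {(0,0,0,0)}"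
      and fF: "\<And>a. a < d \<Longrightarrow> f a \<in> F"
      and gF: "\<And>a. a < d \<Longrightarrow> g a \<in> F"
  shows "\<exists>S. S \<subseteq> F \<and> pairwise_disjoint_lines S \<and> card S = 2 * d"
proof -
  define h where "h n = (if n < d then f n else g (n - d))" for n
  have nz: "\<exists>p. p \<noteq> (0,0,0,0) \<and> p \<in> h n" if "n < 2 * d" for n
    using that nzf nzg unfolding h_def by (cases "n < d") auto
  have dj: "h n \<inter> h m \<subseteq> {(0,0,0,0)}" if "n < 2*d" "m < 2*d" "n \<noteq> m" for n m
  proof (cases "n < d")
    case True
    show ?thesis
    proof (cases "m < d")
      case True
      thus ?thesis using \<open>n < d\<close> that ff unfolding h_def by auto
    next
      case False
      thus ?thesis using \<open>n < d\<close> that fg[of n "m - d"] unfolding h_def by auto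
    qed
  next
    case False
    show ?thesis
    proof (cases "m < d")
      case True
      have "n - d < d" using that by simp
      hence "f m \<inter> g (n - d) \<subseteq> {(0,0,0,0)}" using fg True by blast
      moreover have "h n \<inter> h m = f m \<inter> g (n - d)" using True \<open>\<not> n < d\<close> unfolding h_def by auto
      ultimately show ?thesis by simp
    next
      case False
      thus ?thesis using \<open>\<not> n < d\<close> that gg[of "n - d" "m - d"] unfolding h_def by auto
    qed
  qed
  have sub: "h ` {..<2*d} \<subseteq> F" using fF gF unfolding h_def by auto
  show ?thesis using construct[of "2*d" h, OF nz dj] sub by blast
qed

lemma fam0_bound:
  assumes "S \<subseteq> fam0 d \<eta>" "pairwise_disjoint_lines S"
  shows "card S \<le> d"
proof -
  define g where "g L = (SOME i. \<exists>k. i < d \<and> k < d \<and> L = L0 \<eta> k i)" for L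
  have g: "g L < d \<and> (\<exists>k. k < d \<and> L = L0 \<eta> k (g L))" if "L \<in> fam0 d \<eta>" for L
  proof -
    have "\<exists>i k. i < d \<and> k < d \<and> L = L0 \<eta> k i" using that unfolding fam0_def by auto
    hence "\<exists>k. g L < d \<and> k < d \<and> L = L0 \<eta> k (g L)"
      unfolding g_def by (rule someI_ex)
    thus ?thesis by auto
  qed
  have "inj_on g S"
  proof (rule inj_onI)
    fix A B assume A: "A \<in> S" and B: "B \<in> S" and e: "g A = g B"
    have "A \<in> fam0 d \<eta>" using A assms(1) by blast
    then obtain k where k: "A = L0 \<eta> k (g A)" using g by blast
    have "B \<in> fam0 d \<eta>" using B assms(1) by blast
    then obtain k' where "B = L0 \<eta> k' (g B)" using g by blast
    hence k': "B = L0 \<eta> k' (g A)" using e by simp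
    have "(1, \<eta> ^ g A, 0, 0) \<in> A \<inter> B" using k k' unfolding L0_def by auto
    thus "A = B" using assms(2) A B unfolding pairwise_disjoint_lines_def by fastforce
  qed
  moreover have "g ` S \<subseteq> {..<d}" using g assms(1) by auto
  ultimately show ?thesis using card_inj_on_le[of g S "{..<d}"] by simp
qed

lemma fam1_bound:
  assumes "S \<subseteq> fam1 d \<eta>" "pairwise_disjoint_lines S"
  shows "card S \<le> d"
proof -
  define g where "g L = (SOME i. \<exists>k. i < d \<and> k < d \<and> L = L1 \<eta> k i)" for L
  have g: "g L < d \<and> (\<exists>k. k < d \<and> L = L1 \<eta> k (g L))" if "L \<in> fam1 d \<eta>" for L
  proof -
    have "\<exists>i k. i < d \<and> k < d \<and> L = L1 \<eta> k i" using that unfolding fam1_def by auto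
    hence "\<exists>k. g L < d \<and> k < d \<and> L = L1 \<eta> k (g L)"
      unfolding g_def by (rule someI_ex)
    thus ?thesis by auto
  qed
  have "inj_on g S"
  proof (rule inj_onI)
    fix A B assume A: "A \<in> S" and B: "B \<in> S" and e: "g A = g B"
    have "A \<in> fam1 d \<eta>" using A assms(1) by blast
    then obtain k where k: "A = L1 \<eta> k (g A)" using g by blast
    have "B \<in> fam1 d \<eta>" using B assms(1) by blast
    then obtain k' where "B = L1 \<eta> k' (g B)" using g by blast
    hence k': "B = L1 \<eta> k' (g A)" using e by simp
    have "(0, \<eta> ^ g A, 0, 1) \<in> A \<inter> B" using k k' unfolding L1_def by auto
    thus "A = B" using assms(2) A B unfolding pairwise_disjoint_lines_def by fastforce
  qed
  moreover have "g ` S \<subseteq> {..<d}" using g assms(1) by auto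
  ultimately show ?thesis using card_inj_on_le[of g S "{..<d}"] by simp
qed

lemma fam2_bound:
  assumes "S \<subseteq> fam2 d \<eta> v" "pairwise_disjoint_lines S"
  shows "card S \<le> d"
proof -
  define g where "g L = (SOME i. \<exists>k. i < d \<and> k < d \<and> L = L2 \<eta> v k i)" for L
  have g: "g L < d \<and> (\<exists>k. k < d \<and> L = L2 \<eta> v k (g L))" if "L \<in> fam2 d \<eta> v" for L
  proof -
    have "\<exists>i k. i < d \<and> k < d \<and> L = L2 \<eta> v k i" using that unfolding fam2_def by auto
    hence "\<exists>k. g L < d \<and> k < d \<and> L = L2 \<eta> v k (g L)"
      unfolding g_def by (rule someI_ex)
    thus ?thesis by auto
  qed
  have "inj_on g S"
  proof (rule inj_onI)
    fix A B assume A: "A \<in> S" and B: "B \<in> S" and e: "g A = g B"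
    have "A \<in> fam2 d \<eta> v" using A assms(1) by blast
    then obtain k where k: "A = L2 \<eta> v k (g A)" using g by blast
    have "B \<in> fam2 d \<eta> v" using B assms(1) by blast
    then obtain k' where "B = L2 \<eta> v k' (g B)" using g by blast
    hence k': "B = L2 \<eta> v k' (g A)" using e by simp
    have "(v * \<eta> ^ g A, 0, 0, 1) \<in> A \<inter> B" using k k' unfolding L2_def by auto
    thus "A = B" using assms(2) A B unfolding pairwise_disjoint_lines_def by fastforce
  qed
  moreover have "g ` S \<subseteq> {..<d}" using g assms(1) by auto
  ultimately show ?thesis using card_inj_on_le[of g S "{..<d}"] by simp
qed

lemma pd_subset: "pairwise_disjoint_lines S \<Longrightarrow> T \<subseteq> S \<Longrightarrow> pairwise_disjoint_lines T"
  unfolding pairwise_disjoint_lines_def by blast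

lemma union_bound:
  assumes "S \<subseteq> A \<union> B" "pairwise_disjoint_lines S"
    "\<And>T. T \<subseteq> A \<Longrightarrow> pairwise_disjoint_lines T \<Longrightarrow> card T \<le> d"
    "\<And>T. T \<subseteq> B \<Longrightarrow> pairwise_disjoint_lines T \<Longrightarrow> card T \<le> d'"
  shows "card S \<le> d + d'"
proof -
  have "S = (S \<inter> A) \<union> (S \<inter> B)" using assms(1) by auto
  hence "card S \<le> card (S \<inter> A) + card (S \<inter> B)" by (metis card_Un_le)
  moreover have "card (S \<inter> A) \<le> d" using assms(3)[of "S \<inter> A"] pd_subset[OF assms(2)] by auto
  moreover have "card (S \<inter> B) \<le> d'" using assms(4)[of "S \<inter> B"] pd_subset[OF assms(2)] by auto
  ultimately show ?thesis by simp
qed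

lemma finite_fams: "finite (fam0 d \<eta>)" "finite (fam1 d \<eta>)" "finite (fam2 d \<eta> v)"
proof -
  have "fam0 d \<eta> \<subseteq> (\<lambda>(k,i). L0 \<eta> k i) ` ({..<d} \<times> {..<d})" unfolding fam0_def by auto
  thus "finite (fam0 d \<eta>)" by (rule finite_subset) auto
  have "fam1 d \<eta> \<subseteq> (\<lambda>(k,i). L1 \<eta> k i) ` ({..<d} \<times> {..<d})" unfolding fam1_def by auto
  thus "finite (fam1 d \<eta>)" by (rule finite_subset) auto
  have "fam2 d \<eta> v \<subseteq> (\<lambda>(k,i). L2 \<eta> v k i) ` ({..<d} \<times> {..<d})" unfolding fam2_def by auto
  thus "finite (fam2 d \<eta> v)" by (rule finite_subset) auto
qed

lemma fin_X:
  assumes "finite F"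
  shows "finite {card S | S. S \<subseteq> F \<and> pairwise_disjoint_lines S}"
proof -
  have e: "{card S | S. S \<subseteq> F \<and> pairwise_disjoint_lines S}
     = card ` {S. S \<subseteq> F \<and> pairwise_disjoint_lines S}" by (rule setcompr_eq_image)
  have "{S. S \<subseteq> F \<and> pairwise_disjoint_lines S} \<subseteq> Pow F" by blast
  hence "finite {S. S \<subseteq> F \<and> pairwise_disjoint_lines S}"
    using finite_Pow_iff[THEN iffD2, OF assms] by (rule finite_subset)
  thus ?thesis unfolding e by (rule finite_imageI)
qed

lemma max_le:
  assumes "finite F" "\<And>S. S \<subseteq> F \<Longrightarrow> pairwise_disjoint_lines S \<Longrightarrow> card S \<le> M"
  shows "max_disjoint F \<le> M"
proof -
  have "pairwise_disjoint_lines {}" by (simp add: pairwise_disjoint_lines_def)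
  hence "card {} \<in> {card S | S. S \<subseteq> F \<and> pairwise_disjoint_lines S}"
    by (intro CollectI exI[of _ "{}"]) simp
  hence ne: "{card S | S. S \<subseteq> F \<and> pairwise_disjoint_lines S} \<noteq> {}" by blast
  show ?thesis unfolding max_disjoint_def
  proof (rule Max.boundedI[OF fin_X[OF assms(1)] ne])
    fix x assume "x \<in> {card S | S. S \<subseteq> F \<and> pairwise_disjoint_lines S}"
    then obtain S where "x = card S" "S \<subseteq> F" "pairwise_disjoint_lines S" by blast
    thus "x \<le> M" using assms(2) by simp
  qed
qed

lemma max_ge:
  assumes "finite F" "S0 \<subseteq> F" "pairwise_disjoint_lines S0"
  shows "card S0 \<le> max_disjoint F"
proof -
  have "card S0 \<in> {card S | S. S \<subseteq> F \<and> pairwise_disjoint_lines S}"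
    using assms by (intro CollectI exI[of _ S0]) simp
  thus ?thesis unfolding max_disjoint_def using fin_X[OF assms(1)] by (simp add: Max_ge)
qed


lemma nz0: "\<exists>p. p \<noteq> (0,0,0,0) \<and> p \<in> L0 \<eta> k i"
  by (intro exI[of _ "(1, \<eta>^i, 0, 0)"]) (simp add: L0_def)

lemma nz1: "\<exists>p. p \<noteq> (0,0,0,0) \<and> p \<in> L1 \<eta> k i"
  by (intro exI[of _ "(0, \<eta>^i, 0, 1)"]) (simp add: L1_def)

lemma nz2: "\<exists>p. p \<noteq> (0,0,0,0) \<and> p \<in> L2 \<eta> v k i"
  by (intro exI[of _ "(v * \<eta>^i, 0, 0, 1)"]) (simp add: L2_def)

lemma A_ff:
  assumes "primitive_root d \<eta>" "d \<ge> 3" "a < d" "b < d" "a \<noteq> b"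
  shows "L0 \<eta> a a \<inter> L0 \<eta> b b \<subseteq> {(0,0,0,0)}"
proof
  have ne: "\<eta>^a \<noteq> \<eta>^b" by (rule pr_distinct[OF assms])
  fix p assume pm: "p \<in> L0 \<eta> a a \<inter> L0 \<eta> b b"
  obtain x y z w where p: "p = (x,y,z,w)" by (cases p)
  have h: "y = \<eta>^a*x" "w = \<eta>^a*z" "y = \<eta>^b*x" "w = \<eta>^b*z"
    using pm unfolding p L0_def by auto
  have "\<eta>^a*x = \<eta>^b*x" using h(1,3) by metis
  hence x: "x = 0" by (rule cancel_pow[OF ne])
  have "\<eta>^a*z = \<eta>^b*z" using h(2,4) by metis
  hence z: "z = 0" by (rule cancel_pow[OF ne])
  show "p \<in> {(0,0,0,0)}" using p h(1,2) x z by simp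
qed

lemma A_gg:
  assumes "primitive_root d \<eta>" "d \<ge> 3" "a < d" "b < d" "a \<noteq> b"
  shows "L1 \<eta> 1 a \<inter> L1 \<eta> 1 b \<subseteq> {(0,0,0,0)}"
proof
  have ne: "\<eta>^a \<noteq> \<eta>^b" by (rule pr_distinct[OF assms])
  have nz: "\<eta> \<noteq> 0" using pr_basics[OF assms(1,2)] by simp
  fix p assume pm: "p \<in> L1 \<eta> 1 a \<inter> L1 \<eta> 1 b"
  obtain x y z w where p: "p = (x,y,z,w)" by (cases p)
  have h: "x = \<eta>^(1+a)*z" "y = \<eta>^a*w" "x = \<eta>^(1+b)*z" "y = \<eta>^b*w"
    using pm unfolding p L1_def by auto
  have "\<eta>^a*w = \<eta>^b*w" using h(2,4) by metis
  hence w: "w = 0" by (rule cancel_pow[OF ne])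
  have "\<eta>^(1+a)*z = \<eta>^(1+b)*z" using h(1,3) by metis
  hence "\<eta> * (\<eta>^a*z) = \<eta> * (\<eta>^b*z)" by (simp add: mult.assoc)
  hence "\<eta>^a*z = \<eta>^b*z" using nz by simp
  hence z: "z = 0" by (rule cancel_pow[OF ne])
  show "p \<in> {(0,0,0,0)}" using p h(1,2) w z by simp
qed

lemma A_fg:
  assumes "primitive_root d \<eta>" "d \<ge> 3"
  shows "L0 \<eta> a a \<inter> L1 \<eta> 1 j \<subseteq> {(0,0,0,0)}"
proof
  have nz: "\<eta> \<noteq> 0" "\<eta> \<noteq> 1" using pr_basics[OF assms(1,2)] by simp_all
  fix p assume pm: "p \<in> L0 \<eta> a a \<inter> L1 \<eta> 1 j"
  obtain x y z w where p: "p = (x,y,z,w)" by (cases p)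
  have h: "y = \<eta>^a*x" "w = \<eta>^a*z" "x = \<eta>^(1+j)*z" "y = \<eta>^j*w"
    using pm unfolding p L0_def L1_def by auto
  have "\<eta>^a*(\<eta>^(1+j)*z) = \<eta>^j*(\<eta>^a*z)" using h by metis
  hence "\<eta> * (\<eta>^a*\<eta>^j*z) = 1 * (\<eta>^a*\<eta>^j*z)" by (simp add: ac_simps)
  hence "\<eta>^a*\<eta>^j*z = 0" using nz(2) by (metis mult_cancel_right)
  hence z: "z = 0" using nz(1) by simp
  show "p \<in> {(0,0,0,0)}" using p h(1,2,3) z by simp
qed

lemma B_ff:
  assumes "primitive_root d \<eta>" "d \<ge> 3" "a < d" "b < d" "a \<noteq> b"
  shows "L0 \<eta> a (d-1-a) \<inter> L0 \<eta> b (d-1-b) \<subseteq> {(0,0,0,0)}"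
proof
  have ne: "\<eta>^a \<noteq> \<eta>^b" by (rule pr_distinct[OF assms])
  have ne2: "\<eta>^(d-1-a) \<noteq> \<eta>^(d-1-b)" by (rule pr_distinct) (use assms in auto)
  fix p assume pm: "p \<in> L0 \<eta> a (d-1-a) \<inter> L0 \<eta> b (d-1-b)"
  obtain x y z w where p: "p = (x,y,z,w)" by (cases p)
  have h: "y = \<eta>^(d-1-a)*x" "w = \<eta>^a*z" "y = \<eta>^(d-1-b)*x" "w = \<eta>^b*z"
    using pm unfolding p L0_def by auto
  have "\<eta>^(d-1-a)*x = \<eta>^(d-1-b)*x" using h(1,3) by metis
  hence x: "x = 0" by (rule cancel_pow[OF ne2])
  have "\<eta>^a*z = \<eta>^b*z" using h(2,4) by metis
  hence z: "z = 0" by (rule cancel_pow[OF ne])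
  show "p \<in> {(0,0,0,0)}" using p h(1,2) x z by simp
qed

lemma B_gg:
  assumes "primitive_root d \<eta>" "d \<ge> 3" "a < d" "b < d" "a \<noteq> b" "v \<noteq> 0"
  shows "L2 \<eta> v 0 a \<inter> L2 \<eta> v 0 b \<subseteq> {(0,0,0,0)}"
proof
  have ne: "\<eta>^a \<noteq> \<eta>^b" by (rule pr_distinct[OF assms(1-5)])
  fix p assume pm: "p \<in> L2 \<eta> v 0 a \<inter> L2 \<eta> v 0 b"
  obtain x y z w where p: "p = (x,y,z,w)" by (cases p)
  have h: "x = v*\<eta>^a*w" "y = v*\<eta>^a*z" "x = v*\<eta>^b*w" "y = v*\<eta>^b*z"
    using pm unfolding p L2_def by auto
  have "v*\<eta>^a*w = v*\<eta>^b*w" using h(1,3) by metis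
  hence "\<eta>^a*(v*w) = \<eta>^b*(v*w)" by (simp add: ac_simps)
  hence "v*w = 0" by (rule cancel_pow[OF ne])
  hence w: "w = 0" using assms(6) by simp
  have "v*\<eta>^a*z = v*\<eta>^b*z" using h(2,4) by metis
  hence "\<eta>^a*(v*z) = \<eta>^b*(v*z)" by (simp add: ac_simps)
  hence "v*z = 0" by (rule cancel_pow[OF ne])
  hence z: "z = 0" using assms(6) by simp
  show "p \<in> {(0,0,0,0)}" using p h(1,2) w z by simp
qed

lemma B_fg:
  assumes "primitive_root d \<eta>" "d \<ge> 3" "a < d" "v \<noteq> 0"
  shows "L0 \<eta> a (d-1-a) \<inter> L2 \<eta> v 0 j \<subseteq> {(0,0,0,0)}"
proof
  have nz: "\<eta> \<noteq> 0" using pr_basics[OF assms(1,2)] by simp_all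
  have n1: "\<eta>^(d-1) \<noteq> 1" using assms(1,2) unfolding primitive_root_def by auto
  have ex: "\<eta>^(d-1-a) * \<eta>^a = \<eta>^(d-1)"
  proof -
    have "d-1-a+a = d-1" using assms(3) by simp
    thus ?thesis by (metis power_add)
  qed
  fix p assume pm: "p \<in> L0 \<eta> a (d-1-a) \<inter> L2 \<eta> v 0 j"
  obtain x y z w where p: "p = (x,y,z,w)" by (cases p)
  have h: "y = \<eta>^(d-1-a)*x" "w = \<eta>^a*z" "x = v*\<eta>^j*w" "y = v*\<eta>^j*z"
    using pm unfolding p L0_def L2_def by auto
  have "v*\<eta>^j*z = \<eta>^(d-1-a)*(v*\<eta>^j*(\<eta>^a*z))" using h by metis
  also have "\<dots> = \<eta>^(d-1) * (v*\<eta>^j*z)" using ex by (simp add: ac_simps)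
  finally have "1 * (v*\<eta>^j*z) = \<eta>^(d-1) * (v*\<eta>^j*z)" by simp
  hence "v*\<eta>^j*z = 0" using n1 by (metis mult_cancel_right)
  hence z: "z = 0" using nz assms(4) by simp
  show "p \<in> {(0,0,0,0)}" using p h(1,2,3) z by simp
qed

lemma core:
  fixes x y z w v P Q R T E cc :: complex
  assumes h1: "x = P*z" and h2: "y = Q*w" and h3: "x = v*R*w" and h4: "y = v*T*z"
    and eQP: "Q*P = E" and eRT: "R*T = cc*E" and nE: "E \<noteq> 0" and nc: "v^2*cc \<noteq> 1"
    and nv: "v \<noteq> 0" and nR: "R \<noteq> 0"
  shows "x = 0 \<and> y = 0 \<and> z = 0 \<and> w = 0"
proof -
  have "E*z = (Q*P)*z" by (simp only: eQP)
  also have "\<dots> = Q*(P*z)" by (simp add: mult.assoc)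
  also have "\<dots> = Q*x" using h1 by simp
  also have "\<dots> = v*R*(Q*w)" using h3 by (simp add: ac_simps)
  also have "\<dots> = v*R*y" using h2 by simp
  also have "\<dots> = v*R*(v*T*z)" using h4 by simp
  also have "\<dots> = v^2*(R*T)*z" by (simp add: power2_eq_square ac_simps)
  also have "\<dots> = v^2*(cc*E)*z" by (simp only: eRT)
  also have "\<dots> = (v^2*cc)*(E*z)" by (simp add: ac_simps)
  finally have "1*(E*z) = (v^2*cc)*(E*z)" by simp
  hence "E*z = 0" using nc by (metis mult_cancel_right)
  hence z: "z = 0" using nE by simp
  hence x: "x = 0" using h1 by simp
  hence "v*R*w = 0" using h3 by simp
  hence w: "w = 0" using nv nR by simp
  show ?thesis using x z w h2 by simp
qed

lemma C_ff:
  assumes "primitive_root d \<eta>" "d \<ge> 3" "a < d" "b < d" "a \<noteq> b"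
  shows "L1 \<eta> (2*a) (d-1-a) \<inter> L1 \<eta> (2*b) (d-1-b) \<subseteq> {(0,0,0,0)}"
proof
  have ne: "\<eta>^a \<noteq> \<eta>^b" by (rule pr_distinct[OF assms])
  have ne2: "\<eta>^(d-1-a) \<noteq> \<eta>^(d-1-b)" by (rule pr_distinct) (use assms in auto)
  have nz: "\<eta> \<noteq> 0" using pr_basics[OF assms(1,2)] by simp
  have ea: "\<eta>^(2*a+(d-1-a)) = \<eta>^(d-1)*\<eta>^a"
  proof -
    have "2*a+(d-1-a) = (d-1)+a" using assms(3) by simp
    thus ?thesis by (metis power_add)
  qed
  have eb: "\<eta>^(2*b+(d-1-b)) = \<eta>^(d-1)*\<eta>^b"
  proof -
    have "2*b+(d-1-b) = (d-1)+b" using assms(4) by simp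
    thus ?thesis by (metis power_add)
  qed
  fix p assume pm: "p \<in> L1 \<eta> (2*a) (d-1-a) \<inter> L1 \<eta> (2*b) (d-1-b)"
  obtain x y z w where p: "p = (x,y,z,w)" by (cases p)
  have h: "x = \<eta>^(2*a+(d-1-a))*z" "y = \<eta>^(d-1-a)*w" "x = \<eta>^(2*b+(d-1-b))*z" "y = \<eta>^(d-1-b)*w"
    using pm unfolding p L1_def by auto
  have "\<eta>^(d-1-a)*w = \<eta>^(d-1-b)*w" using h(2,4) by metis
  hence w: "w = 0" by (rule cancel_pow[OF ne2])
  have "\<eta>^(2*a+(d-1-a))*z = \<eta>^(2*b+(d-1-b))*z" using h(1,3) by metis
  hence "\<eta>^(d-1) * (\<eta>^a*z) = \<eta>^(d-1) * (\<eta>^b*z)" unfolding ea eb by (simp add: mult.assoc)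
  hence "\<eta>^a*z = \<eta>^b*z" using nz by simp
  hence z: "z = 0" by (rule cancel_pow[OF ne])
  show "p \<in> {(0,0,0,0)}" using p h(1,2) w z by simp
qed

lemma C_gg:
  assumes "primitive_root d \<eta>" "d \<ge> 3" "a < d" "b < d" "a \<noteq> b" "v \<noteq> 0"
  shows "L2 \<eta> v (2*a+c) (d-1-a) \<inter> L2 \<eta> v (2*b+c) (d-1-b) \<subseteq> {(0,0,0,0)}"
proof
  have ne: "\<eta>^a \<noteq> \<eta>^b" by (rule pr_distinct[OF assms(1-5)])
  have ne2: "\<eta>^(d-1-a) \<noteq> \<eta>^(d-1-b)" by (rule pr_distinct) (use assms in auto)
  have nz: "\<eta> \<noteq> 0" using pr_basics[OF assms(1,2)] by simp
  have ea: "\<eta>^(2*a+c+(d-1-a)) = \<eta>^(d-1+c)*\<eta>^a"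
  proof -
    have "2*a+c+(d-1-a) = (d-1+c)+a" using assms(3) by simp
    thus ?thesis by (metis power_add)
  qed
  have eb: "\<eta>^(2*b+c+(d-1-b)) = \<eta>^(d-1+c)*\<eta>^b"
  proof -
    have "2*b+c+(d-1-b) = (d-1+c)+b" using assms(4) by simp
    thus ?thesis by (metis power_add)
  qed
  fix p assume pm: "p \<in> L2 \<eta> v (2*a+c) (d-1-a) \<inter> L2 \<eta> v (2*b+c) (d-1-b)"
  obtain x y z w where p: "p = (x,y,z,w)" by (cases p)
  have h: "x = v*\<eta>^(d-1-a)*w" "y = v*\<eta>^(2*a+c+(d-1-a))*z" "x = v*\<eta>^(d-1-b)*w" "y = v*\<eta>^(2*b+c+(d-1-b))*z"
    using pm unfolding p L2_def by auto
  have "v*\<eta>^(d-1-a)*w = v*\<eta>^(d-1-b)*w" using h(1,3) by metis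
  hence "\<eta>^(d-1-a)*(v*w) = \<eta>^(d-1-b)*(v*w)" by (simp add: ac_simps)
  hence "v*w = 0" by (rule cancel_pow[OF ne2])
  hence w: "w = 0" using assms(6) by simp
  have "v*\<eta>^(2*a+c+(d-1-a))*z = v*\<eta>^(2*b+c+(d-1-b))*z" using h(2,4) by metis
  hence "(v*\<eta>^(d-1+c)) * (\<eta>^a*z) = (v*\<eta>^(d-1+c)) * (\<eta>^b*z)" unfolding ea eb by (simp add: mult.assoc)
  hence "\<eta>^a*z = \<eta>^b*z" using nz assms(6) by simp
  hence z: "z = 0" by (rule cancel_pow[OF ne])
  show "p \<in> {(0,0,0,0)}" using p h(1,2) w z by simp
qed

lemma C_fg:
  assumes "primitive_root d \<eta>" "d \<ge> 3" "a < d" "b < d" "v \<noteq> 0" "v^2*\<eta>^c \<noteq> 1"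
  shows "L1 \<eta> (2*a) (d-1-a) \<inter> L2 \<eta> v (2*b+c) (d-1-b) \<subseteq> {(0,0,0,0)}"
proof
  have nz: "\<eta> \<noteq> 0" using pr_basics[OF assms(1,2)] by simp
  have eQP: "\<eta>^(d-1-a) * \<eta>^(2*a+(d-1-a)) = \<eta>^(2*(d-1))"
  proof -
    have "(d-1-a)+(2*a+(d-1-a)) = 2*(d-1)" using assms(3) by simp
    thus ?thesis by (metis power_add)
  qed
  have eRT: "\<eta>^(d-1-b) * \<eta>^(2*b+c+(d-1-b)) = \<eta>^c * \<eta>^(2*(d-1))"
  proof -
    have "(d-1-b)+(2*b+c+(d-1-b)) = c + 2*(d-1)" using assms(4) by simp
    thus ?thesis by (metis power_add)
  qed
  fix p assume pm: "p \<in> L1 \<eta> (2*a) (d-1-a) \<inter> L2 \<eta> v (2*b+c) (d-1-b)"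
  obtain x y z w where p: "p = (x,y,z,w)" by (cases p)
  have h: "x = \<eta>^(2*a+(d-1-a))*z" "y = \<eta>^(d-1-a)*w" "x = v*\<eta>^(d-1-b)*w" "y = v*\<eta>^(2*b+c+(d-1-b))*z"
    using pm unfolding p L1_def L2_def by auto
  have "x = 0 \<and> y = 0 \<and> z = 0 \<and> w = 0"
    by (rule core[OF h eQP eRT]) (use nz assms(5,6) in auto)
  thus "p \<in> {(0,0,0,0)}" using p by simp
qed

theorem corollary2p3:
  fixes d :: nat and \<eta> v :: complex
  assumes "d \<ge> 3" and "primitive_root d \<eta>" and "v ^ d = -1"
  shows "max_disjoint (fam0 d \<eta> \<union> fam1 d \<eta>) = 2 * d
       \<and> max_disjoint (fam0 d \<eta> \<union> fam2 d \<eta> v) = 2 * d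
       \<and> max_disjoint (fam1 d \<eta> \<union> fam2 d \<eta> v) = 2 * d
       \<and> 2 * d \<le> s_F d \<eta> v \<and> s_F d \<eta> v \<le> 3 * d"
proof -
  have pr: "primitive_root d \<eta>" and d3: "d \<ge> 3" using assms by auto
  have d0: "d > 0" using d3 by simp
  have ed: "\<eta>^d = 1" and nz: "\<eta> \<noteq> 0" and n1: "\<eta> \<noteq> 1" using pr_basics[OF pr d3] by auto
  have nv: "v \<noteq> 0" using assms(3) d0 by (auto simp: power_0_left)
  obtain c :: nat where c: "v^2*\<eta>^c \<noteq> 1"
  proof (cases "v^2 = 1")
    case True thus ?thesis using that[of 1] n1 by simp
  next
    case False thus ?thesis using that[of 0] by simp
  qed
  note fins = finite_fams(1)[of d \<eta>] finite_fams(2)[of d \<eta>] finite_fams(3)[of d \<eta> v]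
  have b0: "\<And>T. T \<subseteq> fam0 d \<eta> \<Longrightarrow> pairwise_disjoint_lines T \<Longrightarrow> card T \<le> d" by (rule fam0_bound)
  have b1: "\<And>T. T \<subseteq> fam1 d \<eta> \<Longrightarrow> pairwise_disjoint_lines T \<Longrightarrow> card T \<le> d" by (rule fam1_bound)
  have b2: "\<And>T. T \<subseteq> fam2 d \<eta> v \<Longrightarrow> pairwise_disjoint_lines T \<Longrightarrow> card T \<le> d" by (rule fam2_bound)
  have b01: "\<And>T. T \<subseteq> fam0 d \<eta> \<union> fam1 d \<eta> \<Longrightarrow> pairwise_disjoint_lines T \<Longrightarrow> card T \<le> d + d"
    using union_bound b0 b1 by blast
  have b02: "\<And>T. T \<subseteq> fam0 d \<eta> \<union> fam2 d \<eta> v \<Longrightarrow> pairwise_disjoint_lines T \<Longrightarrow> card T \<le> d + d"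
    using union_bound b0 b2 by blast
  have b12: "\<And>T. T \<subseteq> fam1 d \<eta> \<union> fam2 d \<eta> v \<Longrightarrow> pairwise_disjoint_lines T \<Longrightarrow> card T \<le> d + d"
    using union_bound b1 b2 by blast
  have bF: "\<And>T. T \<subseteq> lines_F d \<eta> v \<Longrightarrow> pairwise_disjoint_lines T \<Longrightarrow> card T \<le> (d + d) + d"
    unfolding lines_F_def using union_bound b01 b2 by blast
  have lA: "\<exists>S. S \<subseteq> fam0 d \<eta> \<union> fam1 d \<eta> \<and> pairwise_disjoint_lines S \<and> card S = 2 * d"
  proof (rule construct2[of d "\<lambda>a. L0 \<eta> a a" "\<lambda>a. L1 \<eta> 1 a"])
    show "\<And>a. a < d \<Longrightarrow> \<exists>p. p \<noteq> (0,0,0,0) \<and> p \<in> L0 \<eta> a a" by (rule nz0)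
    show "\<And>a. a < d \<Longrightarrow> \<exists>p. p \<noteq> (0,0,0,0) \<and> p \<in> L1 \<eta> 1 a" by (rule nz1)
    show "\<And>a b. a < d \<Longrightarrow> b < d \<Longrightarrow> a \<noteq> b \<Longrightarrow> L0 \<eta> a a \<inter> L0 \<eta> b b \<subseteq> {(0,0,0,0)}"
      using A_ff[OF pr d3] by blast
    show "\<And>a b. a < d \<Longrightarrow> b < d \<Longrightarrow> a \<noteq> b \<Longrightarrow> L1 \<eta> 1 a \<inter> L1 \<eta> 1 b \<subseteq> {(0,0,0,0)}"
      using A_gg[OF pr d3] by blast
    show "\<And>a b. a < d \<Longrightarrow> b < d \<Longrightarrow> L0 \<eta> a a \<inter> L1 \<eta> 1 b \<subseteq> {(0,0,0,0)}"
      using A_fg[OF pr d3] by blast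
    show "\<And>a. a < d \<Longrightarrow> L0 \<eta> a a \<in> fam0 d \<eta> \<union> fam1 d \<eta>" unfolding fam0_def by blast
    show "\<And>a. a < d \<Longrightarrow> L1 \<eta> 1 a \<in> fam0 d \<eta> \<union> fam1 d \<eta>"
    proof -
      fix a assume "a < d"
      moreover have "(1::nat) < d" using d3 by simp
      ultimately have "L1 \<eta> 1 a \<in> fam1 d \<eta>" unfolding fam1_def by blast
      thus "L1 \<eta> 1 a \<in> fam0 d \<eta> \<union> fam1 d \<eta>" by blast
    qed
  qed
  have lB: "\<exists>S. S \<subseteq> fam0 d \<eta> \<union> fam2 d \<eta> v \<and> pairwise_disjoint_lines S \<and> card S = 2 * d"
  proof (rule construct2[of d "\<lambda>a. L0 \<eta> a (d-1-a)" "\<lambda>a. L2 \<eta> v 0 a"])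
    show "\<And>a. a < d \<Longrightarrow> \<exists>p. p \<noteq> (0,0,0,0) \<and> p \<in> L0 \<eta> a (d-1-a)" by (rule nz0)
    show "\<And>a. a < d \<Longrightarrow> \<exists>p. p \<noteq> (0,0,0,0) \<and> p \<in> L2 \<eta> v 0 a" by (rule nz2)
    show "\<And>a b. a < d \<Longrightarrow> b < d \<Longrightarrow> a \<noteq> b \<Longrightarrow> L0 \<eta> a (d-1-a) \<inter> L0 \<eta> b (d-1-b) \<subseteq> {(0,0,0,0)}"
      using B_ff[OF pr d3] by blast
    show "\<And>a b. a < d \<Longrightarrow> b < d \<Longrightarrow> a \<noteq> b \<Longrightarrow> L2 \<eta> v 0 a \<inter> L2 \<eta> v 0 b \<subseteq> {(0,0,0,0)}"
      using B_gg[OF pr d3] nv by blast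
    show "\<And>a b. a < d \<Longrightarrow> b < d \<Longrightarrow> L0 \<eta> a (d-1-a) \<inter> L2 \<eta> v 0 b \<subseteq> {(0,0,0,0)}"
      using B_fg[OF pr d3] nv by blast
    show "\<And>a. a < d \<Longrightarrow> L0 \<eta> a (d-1-a) \<in> fam0 d \<eta> \<union> fam2 d \<eta> v"
    proof -
      fix a assume "a < d"
      moreover have "d-1-a < d" using d0 by simp
      ultimately have "L0 \<eta> a (d-1-a) \<in> fam0 d \<eta>" unfolding fam0_def by blast
      thus "L0 \<eta> a (d-1-a) \<in> fam0 d \<eta> \<union> fam2 d \<eta> v" by blast
    qed
    show "\<And>a. a < d \<Longrightarrow> L2 \<eta> v 0 a \<in> fam0 d \<eta> \<union> fam2 d \<eta> v"
    proof -
      fix a assume "a < d"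
      hence "L2 \<eta> v 0 a \<in> fam2 d \<eta> v" using d0 unfolding fam2_def by blast
      thus "L2 \<eta> v 0 a \<in> fam0 d \<eta> \<union> fam2 d \<eta> v" by blast
    qed
  qed
  have lC: "\<exists>S. S \<subseteq> fam1 d \<eta> \<union> fam2 d \<eta> v \<and> pairwise_disjoint_lines S \<and> card S = 2 * d"
  proof (rule construct2[of d "\<lambda>a. L1 \<eta> (2*a) (d-1-a)" "\<lambda>a. L2 \<eta> v (2*a+c) (d-1-a)"])
    show "\<And>a. a < d \<Longrightarrow> \<exists>p. p \<noteq> (0,0,0,0) \<and> p \<in> L1 \<eta> (2*a) (d-1-a)" by (rule nz1)
    show "\<And>a. a < d \<Longrightarrow> \<exists>p. p \<noteq> (0,0,0,0) \<and> p \<in> L2 \<eta> v (2*a+c) (d-1-a)" by (rule nz2)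
    show "\<And>a b. a < d \<Longrightarrow> b < d \<Longrightarrow> a \<noteq> b \<Longrightarrow> L1 \<eta> (2*a) (d-1-a) \<inter> L1 \<eta> (2*b) (d-1-b) \<subseteq> {(0,0,0,0)}"
      using C_ff[OF pr d3] by blast
    show "\<And>a b. a < d \<Longrightarrow> b < d \<Longrightarrow> a \<noteq> b \<Longrightarrow> L2 \<eta> v (2*a+c) (d-1-a) \<inter> L2 \<eta> v (2*b+c) (d-1-b) \<subseteq> {(0,0,0,0)}"
      using C_gg[OF pr d3] nv by blast
    show "\<And>a b. a < d \<Longrightarrow> b < d \<Longrightarrow> L1 \<eta> (2*a) (d-1-a) \<inter> L2 \<eta> v (2*b+c) (d-1-b) \<subseteq> {(0,0,0,0)}"
      using C_fg[OF pr d3] nv c by blast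
    show "\<And>a. a < d \<Longrightarrow> L1 \<eta> (2*a) (d-1-a) \<in> fam1 d \<eta> \<union> fam2 d \<eta> v"
      using L1_in[OF ed d0] by auto
    show "\<And>a. a < d \<Longrightarrow> L2 \<eta> v (2*a+c) (d-1-a) \<in> fam1 d \<eta> \<union> fam2 d \<eta> v"
      using L2_in[OF ed d0] by auto
  qed
  have f01: "finite (fam0 d \<eta> \<union> fam1 d \<eta>)" using fins by simp
  have f02: "finite (fam0 d \<eta> \<union> fam2 d \<eta> v)" using fins by simp
  have f12: "finite (fam1 d \<eta> \<union> fam2 d \<eta> v)" using fins by simp
  have fF: "finite (lines_F d \<eta> v)" using fins unfolding lines_F_def by simp
  have r1: "max_disjoint (fam0 d \<eta> \<union> fam1 d \<eta>) = 2 * d"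
  proof (rule antisym)
    show "max_disjoint (fam0 d \<eta> \<union> fam1 d \<eta>) \<le> 2 * d"
    proof (rule max_le[OF f01])
      fix S assume "S \<subseteq> fam0 d \<eta> \<union> fam1 d \<eta>" "pairwise_disjoint_lines S"
      hence "card S \<le> d + d" by (rule b01)
      thus "card S \<le> 2 * d" by simp
    qed
    obtain S where "S \<subseteq> fam0 d \<eta> \<union> fam1 d \<eta>" "pairwise_disjoint_lines S" "card S = 2 * d" using lA by blast
    thus "2 * d \<le> max_disjoint (fam0 d \<eta> \<union> fam1 d \<eta>)" using max_ge[OF f01] by metis
  qed
  have r2: "max_disjoint (fam0 d \<eta> \<union> fam2 d \<eta> v) = 2 * d"
  proof (rule antisym)
    show "max_disjoint (fam0 d \<eta> \<union> fam2 d \<eta> v) \<le> 2 * d"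
    proof (rule max_le[OF f02])
      fix S assume "S \<subseteq> fam0 d \<eta> \<union> fam2 d \<eta> v" "pairwise_disjoint_lines S"
      hence "card S \<le> d + d" by (rule b02)
      thus "card S \<le> 2 * d" by simp
    qed
    obtain S where "S \<subseteq> fam0 d \<eta> \<union> fam2 d \<eta> v" "pairwise_disjoint_lines S" "card S = 2 * d" using lB by blast
    thus "2 * d \<le> max_disjoint (fam0 d \<eta> \<union> fam2 d \<eta> v)" using max_ge[OF f02] by metis
  qed
  have r3: "max_disjoint (fam1 d \<eta> \<union> fam2 d \<eta> v) = 2 * d"
  proof (rule antisym)
    show "max_disjoint (fam1 d \<eta> \<union> fam2 d \<eta> v) \<le> 2 * d"
    proof (rule max_le[OF f12])
      fix S assume "S \<subseteq> fam1 d \<eta> \<union> fam2 d \<eta> v" "pairwise_disjoint_lines S"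
      hence "card S \<le> d + d" by (rule b12)
      thus "card S \<le> 2 * d" by simp
    qed
    obtain S where "S \<subseteq> fam1 d \<eta> \<union> fam2 d \<eta> v" "pairwise_disjoint_lines S" "card S = 2 * d" using lC by blast
    thus "2 * d \<le> max_disjoint (fam1 d \<eta> \<union> fam2 d \<eta> v)" using max_ge[OF f12] by metis
  qed
  have r4: "2 * d \<le> s_F d \<eta> v"
  proof -
    obtain S where "S \<subseteq> fam0 d \<eta> \<union> fam1 d \<eta>" "pairwise_disjoint_lines S" "card S = 2 * d" using lA by blast
    hence "S \<subseteq> lines_F d \<eta> v" "pairwise_disjoint_lines S" "card S = 2 * d" unfolding lines_F_def by auto
    thus ?thesis unfolding s_F_def using max_ge[OF fF] by metis
  qed
  have r5: "s_F d \<eta> v \<le> 3 * d"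
    unfolding s_F_def
  proof (rule max_le[OF fF])
    fix S assume "S \<subseteq> lines_F d \<eta> v" "pairwise_disjoint_lines S"
    hence "card S \<le> d + d + d" by (rule bF)
    thus "card S \<le> 3 * d" by simp
  qed
  show ?thesis using r1 r2 r3 r4 r5 by simp
qed

end
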